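(* Let $G$ be an abelian group and let $\mathrm{pAut}\,G$ be the set of all partial automorphisms $\varphi$ of $G$ such that $G/\mathrm{Dom}\,\varphi$ and $G/\mathrm{Im}\,\varphi$ are $\aleph_1$-free. Then $\mathrm{pAut}\,G$ is a submonoid of the monoid of all partial automorphisms of $G$ (under composition of partial maps), it contains $1=\mathrm{id}_G$ and $-1=-\mathrm{id}_G$, and it is closed under taking weak inverses: if $\varphi\in\mathrm{pAut}\,G$ then $\varphi^{-1}\in\mathrm{pAut}\,G$.
   Context: A partial automorphism of $G$ is a group isomorphism $\varphi:\mathrm{Dom}\,\varphi\to\mathrm{Im}\,\varphi$ between subgroups of $G$; maps act on the right. The composition of partial automorphisms $\varphi,\psi$ is the partial automorphism $\varphi\psi$ with $\mathrm{Dom}(\varphi\psi)=(\mathrm{Im}\,\varphi\cap\mathrm{Dom}\,\psi)\varphi^{-1}$, $x(\varphi\psi)=(x\varphi)\psi$, and $\mathrm{Im}(\varphi\psi)=(\mathrm{Im}\,\varphi\cap\mathrm{Dom}\,\psi)\psi$. The weak inverse $\varphi^{-1}$ is the inverse isomorphism $\mathrm{Im}\,\varphi\to\mathrm{Dom}\,\varphi$. An abelian group is $\aleph_1$-free if every countable subgroup is free. *)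

theory Defs
  imports "HOL-Algebra.Free_Abelian_Groups" "HOL-Algebra.Coset" "HOL-Library.Countable_Set"
begin

text \<open>Partial maps are represented as maps 'a => 'a option (domain = dom, image = ran).
  Groups are HOL-Algebra structures written multiplicatively.\<close>

definition partial_aut :: "('a, 'b) monoid_scheme \<Rightarrow> ('a \<Rightarrow> 'a option) \<Rightarrow> bool" where
  "partial_aut G \<phi> \<longleftrightarrow> subgroup (dom \<phi>) G \<and> subgroup (ran \<phi>) G \<and> inj_on \<phi> (dom \<phi>) \<and>
     (\<forall>x\<in>dom \<phi>. \<forall>y\<in>dom \<phi>. \<phi> (x \<otimes>\<^bsub>G\<^esub> y) = Some (the (\<phi> x) \<otimes>\<^bsub>G\<^esub> the (\<phi> y)))"

text \<open>Composition, maps acting on the right: x(phi psi) = (x phi) psi.\<close>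
definition pcomp :: "('a \<Rightarrow> 'a option) \<Rightarrow> ('a \<Rightarrow> 'a option) \<Rightarrow> ('a \<Rightarrow> 'a option)" where
  "pcomp \<phi> \<psi> = \<psi> \<circ>\<^sub>m \<phi>"

definition pinv :: "('a \<Rightarrow> 'a option) \<Rightarrow> ('a \<Rightarrow> 'a option)" where
  "pinv \<phi> = (\<lambda>y. if y \<in> ran \<phi> then Some (THE x. \<phi> x = Some y) else None)"

definition pid :: "('a, 'b) monoid_scheme \<Rightarrow> ('a \<Rightarrow> 'a option)" where
  "pid G = (\<lambda>x. if x \<in> carrier G then Some x else None)"

definition pneg :: "('a, 'b) monoid_scheme \<Rightarrow> ('a \<Rightarrow> 'a option)" where
  "pneg G = (\<lambda>x. if x \<in> carrier G then Some (inv\<^bsub>G\<^esub> x) else None)"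

text \<open>Free abelian group: isomorphic to the free abelian group on some basis set.
  The basis is taken in the carrier type, which is no restriction (a basis embeds in the group).\<close>
definition free_abelian :: "('c, 'd) monoid_scheme \<Rightarrow> bool" where
  "free_abelian A \<longleftrightarrow> (\<exists>B :: 'c set. A \<cong> free_Abelian_group B)"

definition aleph1_free :: "('c, 'd) monoid_scheme \<Rightarrow> bool" where
  "aleph1_free A \<longleftrightarrow> (\<forall>S. subgroup S A \<and> countable S \<longrightarrow> free_abelian (A\<lparr>carrier := S\<rparr>))"

definition pAut :: "('a, 'b) monoid_scheme \<Rightarrow> ('a \<Rightarrow> 'a option) set" where
  "pAut G = {\<phi>. partial_aut G \<phi> \<and> aleph1_free (G Mod (dom \<phi>)) \<and> aleph1_free (G Mod (ran \<phi>))}"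

end

theory Submission
  imports Defs
begin

lemma free_hom_unique:
  assumes H: "group H" and f: "f \<in> hom (free_Abelian_group S) H" and g: "g \<in> hom (free_Abelian_group S) H"
    and eq: "\<And>s. s \<in> S \<Longrightarrow> f (frag_of s) = g (frag_of s)"
    and x: "x \<in> carrier (free_Abelian_group S)"
  shows "f x = g x"
proof -
  interpret F: group_hom "free_Abelian_group S" H f
    using f H by (simp add: group_hom_def group_hom_axioms_def)
  interpret Gh: group_hom "free_Abelian_group S" H g
    using g H by (simp add: group_hom_def group_hom_axioms_def)
  have sub: "\<And>a b. Poly_Mapping.keys a \<subseteq> S \<Longrightarrow> Poly_Mapping.keys b \<subseteq> S \<Longrightarrow>
      a - b = a \<otimes>\<^bsub>free_Abelian_group S\<^esub> inv\<^bsub>free_Abelian_group S\<^esub> b"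
    by simp
  from x have "Poly_Mapping.keys x \<subseteq> S" by simp
  then show ?thesis
  proof (rule free_Abelian_group_induct[where P="\<lambda>x. f x = g x"])
    show "f 0 = g 0" using F.hom_one Gh.hom_one by simp
  next
    fix a b assume "Poly_Mapping.keys a \<subseteq> S" "Poly_Mapping.keys b \<subseteq> S" "f a = g a" "f b = g b"
    then have c: "a \<in> carrier (free_Abelian_group S)" "b \<in> carrier (free_Abelian_group S)"
      and e: "f a = g a" "f b = g b" by auto
    have "f (a - b) = f a \<otimes>\<^bsub>H\<^esub> inv\<^bsub>H\<^esub> f b"
      unfolding sub[OF \<open>Poly_Mapping.keys a \<subseteq> S\<close> \<open>Poly_Mapping.keys b \<subseteq> S\<close>]
      using c by (metis F.hom_mult F.hom_inv F.G.inv_closed)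
    moreover have "g (a - b) = g a \<otimes>\<^bsub>H\<^esub> inv\<^bsub>H\<^esub> g b"
      unfolding sub[OF \<open>Poly_Mapping.keys a \<subseteq> S\<close> \<open>Poly_Mapping.keys b \<subseteq> S\<close>]
      using c by (metis Gh.hom_mult Gh.hom_inv F.G.inv_closed)
    ultimately show "f (a - b) = g (a - b)" using e by simp
  next
    fix s assume "s \<in> S" then show "f (frag_of s) = g (frag_of s)" using eq by simp
  qed
qed


lemma free_abelian_iso_any:
  fixes A :: "('c, 'd) monoid_scheme" and Z :: "'z set"
  assumes A: "group A" and iso: "A \<cong> free_Abelian_group Z"
  shows "free_abelian A"
proof -
  have "free_Abelian_group Z \<cong> A" using group.iso_sym[OF A iso] .
  then obtain h where h: "h \<in> iso (free_Abelian_group Z) A" by (auto simp: is_iso_def)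
  define B where "B = (h \<circ> frag_of) ` Z"
  have inj: "inj_on (h \<circ> frag_of) Z"
  proof (rule inj_onI)
    fix x y assume xy: "x \<in> Z" "y \<in> Z" "(h \<circ> frag_of) x = (h \<circ> frag_of) y"
    have "inj_on h (carrier (free_Abelian_group Z))" using h by (simp add: iso_def bij_betw_def)
    then have "frag_of x = (frag_of y :: 'z \<Rightarrow>\<^sub>0 int)" using xy by (auto dest: inj_onD)
    then show "x = y" by (simp add: frag_of_eq)
  qed
  then have "Z \<approx> B" unfolding B_def eqpoll_def using inj_on_imp_bij_betw[OF inj] by blast
  then have "free_Abelian_group Z \<cong> free_Abelian_group B" by (simp add: isomorphic_free_Abelian_groups)
  with iso have "A \<cong> free_Abelian_group B" by (rule iso_trans)
  then show ?thesis unfolding free_abelian_def by blast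
qed

lemma free_abelian_iso:
  fixes A :: "('c, 'd) monoid_scheme" and A' :: "('e, 'f) monoid_scheme"
  assumes A: "group A" and iso: "A \<cong> A'" and fr: "free_abelian A'"
  shows "free_abelian A"
proof -
  from fr obtain B :: "'e set" where "A' \<cong> free_Abelian_group B" by (auto simp: free_abelian_def)
  with iso have "A \<cong> free_Abelian_group B" by (rule iso_trans)
  then show ?thesis using A free_abelian_iso_any by blast
qed

lemma comm_group_DirProd:
  assumes "comm_group G" "comm_group H" shows "comm_group (G \<times>\<times> H)"
proof (rule group.group_comm_groupI)
  show "group (G \<times>\<times> H)" using assms by (simp add: DirProd_group comm_group.axioms(2))
  fix x y assume "x \<in> carrier (G \<times>\<times> H)" "y \<in> carrier (G \<times>\<times> H)"
  then show "x \<otimes>\<^bsub>G \<times>\<times> H\<^esub> y = y \<otimes>\<^bsub>G \<times>\<times> H\<^esub> x"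
  proof -
    interpret g1: comm_group G by fact
    interpret g2: comm_group H by fact
    from \<open>x \<in> carrier (G \<times>\<times> H)\<close> \<open>y \<in> carrier (G \<times>\<times> H)\<close> show ?thesis
      by (auto simp: mult_DirProd' g1.m_comm g2.m_comm)
  qed
qed

lemma DirProd_free_iso:
  fixes X :: "'x set" and Y :: "'y set"
  shows "free_Abelian_group X \<times>\<times> free_Abelian_group Y \<cong> free_Abelian_group (X <+> Y)"
proof -
  let ?P = "free_Abelian_group X \<times>\<times> free_Abelian_group Y"
  let ?F = "free_Abelian_group (X <+> Y)"
  have cP: "comm_group ?P" by (intro comm_group_DirProd abelian_free_Abelian_group)
  have cF: "comm_group ?F" by (rule abelian_free_Abelian_group)
  obtain h where h: "h \<in> hom ?F ?P"
    and hg: "\<And>z. z \<in> X <+> Y \<Longrightarrow> h (frag_of z) = case_sum (\<lambda>x. (frag_of x, 0)) (\<lambda>y. (0, frag_of y)) z"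
  proof -
    have "case_sum (\<lambda>x. (frag_of x, 0)) (\<lambda>y. (0, frag_of y)) ` (X <+> Y) \<subseteq> carrier ?P"
      by auto
    from comm_group.free_Abelian_group_universal[OF cP this] that show thesis by blast
  qed
  obtain u where u: "u \<in> hom (free_Abelian_group X) ?F" and ug: "\<And>x. x \<in> X \<Longrightarrow> u (frag_of x) = frag_of (Inl x)"
  proof -
    have "(\<lambda>x. frag_of (Inl x)) ` X \<subseteq> carrier ?F" by auto
    from comm_group.free_Abelian_group_universal[OF cF this] that show thesis by blast
  qed
  obtain v where v: "v \<in> hom (free_Abelian_group Y) ?F" and vg: "\<And>y. y \<in> Y \<Longrightarrow> v (frag_of y) = frag_of (Inr y)"
  proof -
    have "(\<lambda>y. frag_of (Inr y)) ` Y \<subseteq> carrier ?F" by auto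
    from comm_group.free_Abelian_group_universal[OF cF this] that show thesis by blast
  qed
  define k where "k = (\<lambda>p. u (fst p) + v (snd p))"
  have uc: "\<And>a. Poly_Mapping.keys a \<subseteq> X \<Longrightarrow> Poly_Mapping.keys (u a) \<subseteq> X <+> Y"
    using u by (metis carrier_free_Abelian_group_iff hom_in_carrier)
  have vc: "\<And>a. Poly_Mapping.keys a \<subseteq> Y \<Longrightarrow> Poly_Mapping.keys (v a) \<subseteq> X <+> Y"
    using v by (metis carrier_free_Abelian_group_iff hom_in_carrier)
  have u0: "u 0 = 0" using u by (metis group_hom.hom_one group_free_Abelian_group group_hom_axioms_def group_hom_def one_free_Abelian_group)
  have v0: "v 0 = 0" using v by (metis group_hom.hom_one group_free_Abelian_group group_hom_axioms_def group_hom_def one_free_Abelian_group)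
  have k: "k \<in> hom ?P ?F"
  proof (rule homI)
    fix p assume "p \<in> carrier ?P"
    then obtain a b where "p = (a, b)" "Poly_Mapping.keys a \<subseteq> X" "Poly_Mapping.keys b \<subseteq> Y" by auto
    then show "k p \<in> carrier ?F" using uc[of a] vc[of b] keys_add[of "u a" "v b"] unfolding k_def
      by auto
  next
    fix p q assume "p \<in> carrier ?P" "q \<in> carrier ?P"
    then show "k (p \<otimes>\<^bsub>?P\<^esub> q) = k p \<otimes>\<^bsub>?F\<^esub> k q"
      unfolding k_def by (auto simp: mult_DirProd' hom_frag_add[OF u] hom_frag_add[OF v] algebra_simps)
  qed
  have kh: "k (h c) = c" if "c \<in> carrier ?F" for c
  proof -
    have "(k \<circ> h) c = id c"
    proof (rule free_hom_unique[OF group_free_Abelian_group _ _ _ that])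
      show "k \<circ> h \<in> hom ?F ?F" using h k by (rule hom_compose)
      show "id \<in> hom ?F ?F" by (simp add: group_hom_free_Abelian_groups_id)
      fix z assume "z \<in> X <+> Y"
      then show "(k \<circ> h) (frag_of z) = id (frag_of z)"
        by (auto simp: hg k_def ug vg u0 v0)
    qed
    then show ?thesis by simp
  qed
  have hu: "h (u a) = (a, 0)" if "a \<in> carrier (free_Abelian_group X)" for a
  proof -
    have "(h \<circ> u) a = (\<lambda>a. (a, 0)) a"
    proof (rule free_hom_unique[OF DirProd_group[OF group_free_Abelian_group group_free_Abelian_group] _ _ _ that])
      show "h \<circ> u \<in> hom (free_Abelian_group X) ?P" using u h by (rule hom_compose)
      show "(\<lambda>a. (a, 0)) \<in> hom (free_Abelian_group X) ?P" by (rule homI) auto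
      fix x assume "x \<in> X" then show "(h \<circ> u) (frag_of x) = (frag_of x, 0)" using hg[of "Inl x"] by (simp add: ug InlI)
    qed
    then show ?thesis by simp
  qed
  have hv: "h (v b) = (0, b)" if "b \<in> carrier (free_Abelian_group Y)" for b
  proof -
    have "(h \<circ> v) b = (\<lambda>b. (0, b)) b"
    proof (rule free_hom_unique[OF DirProd_group[OF group_free_Abelian_group group_free_Abelian_group] _ _ _ that])
      show "h \<circ> v \<in> hom (free_Abelian_group Y) ?P" using v h by (rule hom_compose)
      show "(\<lambda>b. (0, b)) \<in> hom (free_Abelian_group Y) ?P" by (rule homI) auto
      fix y assume "y \<in> Y" then show "(h \<circ> v) (frag_of y) = (0, frag_of y)" using hg[of "Inr y"] by (simp add: vg InrI)
    qed
    then show ?thesis by simp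
  qed
  have hk: "h (k p) = p" if pP: "p \<in> carrier ?P" for p
  proof -
    obtain a b where p: "p = (a, b)" and a: "a \<in> carrier (free_Abelian_group X)" and b: "b \<in> carrier (free_Abelian_group Y)"
      using pP by auto
    have "h (k p) = h (u a \<otimes>\<^bsub>?F\<^esub> v b)" by (simp add: k_def p)
    also have "\<dots> = h (u a) \<otimes>\<^bsub>?P\<^esub> h (v b)"
    proof -
      have "u a \<in> carrier ?F" "v b \<in> carrier ?F" using a b uc vc by auto
      then show ?thesis using h by (rule_tac hom_mult) auto
    qed
    also have "\<dots> = p" using a b by (simp add: hu hv p)
    finally show ?thesis .
  qed
  have "h \<in> iso ?F ?P"
  proof (rule isoI[OF h])
    show "bij_betw h (carrier ?F) (carrier ?P)"
    proof (rule bij_betwI[where g=k])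
      show "h \<in> carrier ?F \<rightarrow> carrier ?P" using h by (simp add: hom_def)
      show "k \<in> carrier ?P \<rightarrow> carrier ?F" using k by (simp add: hom_def)
    qed (simp_all add: kh hk)
  qed
  then have "?F \<cong> ?P" by (rule is_isoI)
  then show ?thesis using group.iso_sym group_free_Abelian_group by blast
qed


lemma free_ext:
  fixes S :: "('c, 'd) monoid_scheme" (structure)
  assumes cS: "comm_group S" and N: "subgroup N S"
    and fN: "free_abelian (S\<lparr>carrier := N\<rparr>)" and fQ: "free_abelian (S Mod N)"
  shows "free_abelian S"
proof -
  interpret comm_group S by fact
  have nN: "N \<lhd> S" using N by (simp add: normal_iff_subgroup)
  interpret nrm: normal N S by fact
  have gQ: "group (S Mod N)" by (rule nrm.factorgroup_is_group)
  have gN: "group (S\<lparr>carrier := N\<rparr>)" using N by (rule subgroup_imp_group)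
  from fQ obtain Y :: "'c set set" where "S Mod N \<cong> free_Abelian_group Y" by (auto simp: free_abelian_def)
  then have "free_Abelian_group Y \<cong> S Mod N" using group.iso_sym[OF gQ] by blast
  then obtain g where g: "g \<in> iso (free_Abelian_group Y) (S Mod N)" by (auto simp: is_iso_def)
  from fN obtain X :: "'c set" where NX: "S\<lparr>carrier := N\<rparr> \<cong> free_Abelian_group X" by (auto simp: free_abelian_def)
  have ghom: "g \<in> hom (free_Abelian_group Y) (S Mod N)" using g by (simp add: iso_def)
  define r where "r = (\<lambda>y. SOME x. x \<in> g (frag_of y))"
  have r: "r y \<in> carrier S \<and> N #> r y = g (frag_of y)" if "y \<in> Y" for y
  proof -
    have "g (frag_of y) \<in> carrier (S Mod N)" using ghom that by (auto intro: hom_in_carrier)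
    then obtain a where a: "a \<in> carrier S" "g (frag_of y) = N #> a" by (auto simp: carrier_FactGroup)
    have "a \<in> g (frag_of y)" using a N by (simp add: rcos_self)
    then have ry: "r y \<in> N #> a" unfolding r_def a(2) by (metis someI)
    then have "r y \<in> carrier S" using a N by (meson subgroup.elemrcos_carrier is_group)
    moreover have "N #> a = N #> r y" using repr_independence[OF ry a(1) N] .
    ultimately show ?thesis using a by simp
  qed
  have "r ` Y \<subseteq> carrier S" using r by auto
  then obtain s where s: "s \<in> hom (free_Abelian_group Y) S" and sg: "\<And>y. y \<in> Y \<Longrightarrow> s (frag_of y) = r y"
    using free_Abelian_group_universal by blast
  have pis: "N #> s z = g z" if "z \<in> carrier (free_Abelian_group Y)" for z
  proof -
    have "((\<lambda>a. N #> a) \<circ> s) z = g z"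
    proof (rule free_hom_unique[OF gQ _ ghom _ that])
      show "(\<lambda>a. N #> a) \<circ> s \<in> hom (free_Abelian_group Y) (S Mod N)"
        using Group.hom_compose[OF s nrm.r_coset_hom_Mod] by (simp add: comp_def)
      fix y assume "y \<in> Y" then show "((\<lambda>a. N #> a) \<circ> s) (frag_of y) = g (frag_of y)"
        using r sg by simp
    qed
    then show ?thesis by simp
  qed
  have Nsub: "N \<subseteq> carrier S" using N by (rule subgroup.subset)
  have absorb: "N #> (n \<otimes> a) = N #> a" if "n \<in> N" "a \<in> carrier S" for n a
    using that Nsub coset_mult_assoc[of N n a] subgroup.rcos_const[OF N is_group, of n] by auto
  define P where "P = S\<lparr>carrier := N\<rparr> \<times>\<times> free_Abelian_group Y"
  have gP: "group P" unfolding P_def using gN by (simp add: DirProd_group)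
  define \<Phi> where "\<Phi> = (\<lambda>p. fst p \<otimes> s (snd p))"
  have sc: "s z \<in> carrier S" if "z \<in> carrier (free_Abelian_group Y)" for z
    using s that by (rule hom_in_carrier)
  have Phom: "\<Phi> \<in> hom P S"
  proof (rule homI)
    fix p assume "p \<in> carrier P"
    then show "\<Phi> p \<in> carrier S" unfolding P_def \<Phi>_def using Nsub sc by auto
  next
    fix p q assume pq: "p \<in> carrier P" "q \<in> carrier P"
    then obtain n z m w where p: "p = (n, z)" "n \<in> N" "z \<in> carrier (free_Abelian_group Y)"
      and q: "q = (m, w)" "m \<in> N" "w \<in> carrier (free_Abelian_group Y)"
      unfolding P_def by auto
    have "s (z + w) = s z \<otimes> s w" using s p q by (metis hom_mult mult_free_Abelian_group)
    moreover have "n \<in> carrier S" "m \<in> carrier S" using p q Nsub by auto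
    ultimately show "\<Phi> (p \<otimes>\<^bsub>P\<^esub> q) = \<Phi> p \<otimes> \<Phi> q"
      unfolding P_def \<Phi>_def using p q sc[of z] sc[of w] by (simp add: m_ac)
  qed
  have Pinj: "inj_on \<Phi> (carrier P)"
  proof (rule inj_onI)
    fix p q assume pq: "p \<in> carrier P" "q \<in> carrier P" and e: "\<Phi> p = \<Phi> q"
    then obtain n z m w where p: "p = (n, z)" "n \<in> N" "z \<in> carrier (free_Abelian_group Y)"
      and q: "q = (m, w)" "m \<in> N" "w \<in> carrier (free_Abelian_group Y)"
      unfolding P_def by auto
    have e': "n \<otimes> s z = m \<otimes> s w" using e p q by (simp add: \<Phi>_def)
    have "g z = g w"
      using pis[OF p(3)] pis[OF q(3)] absorb[OF p(2) sc[OF p(3)]] absorb[OF q(2) sc[OF q(3)]] e' by simp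
    then have zw: "z = w" using g p(3) q(3) by (auto simp: iso_def bij_betw_def dest: inj_onD)
    then have "n = m" using e' p q Nsub sc[OF p(3)] by (metis right_cancel subsetD)
    then show "p = q" using p q zw by simp
  qed
  have Psurj: "\<Phi> ` carrier P = carrier S"
  proof
    show "\<Phi> ` carrier P \<subseteq> carrier S" using Phom by (auto intro: hom_in_carrier)
  next
    show "carrier S \<subseteq> \<Phi> ` carrier P"
    proof
      fix x assume x: "x \<in> carrier S"
      have "N #> x \<in> carrier (S Mod N)" using x by (auto simp: carrier_FactGroup)
      then obtain z where z: "z \<in> carrier (free_Abelian_group Y)" "g z = N #> x"
        using g unfolding iso_def bij_betw_def by (metis (mono_tags, lifting) imageE mem_Collect_eq)
      have "x \<in> N #> s z" using pis[OF z(1)] z(2) x N by (simp add: rcos_self)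
      then obtain n where n: "n \<in> N" "x = n \<otimes> s z" by (auto simp: r_coset_def)
      then have "(n, z) \<in> carrier P" using z unfolding P_def by simp
      moreover have "\<Phi> (n, z) = x" using n by (simp add: \<Phi>_def)
      ultimately show "x \<in> \<Phi> ` carrier P" by (metis image_eqI)
    qed
  qed
  have "\<Phi> \<in> iso P S" using Phom Pinj Psurj by (simp add: iso_def bij_betw_def)
  then have "P \<cong> S" by (rule is_isoI)
  then have "S \<cong> P" using group.iso_sym[OF gP] by blast
  also have "P \<cong> free_Abelian_group X \<times>\<times> free_Abelian_group Y"
    unfolding P_def using group.DirProd_iso_trans[OF gN NX iso_refl] .
  also have "\<dots> \<cong> free_Abelian_group (X <+> Y)" by (rule DirProd_free_iso)
  finally show ?thesis using free_abelian_iso_any is_group by blast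
qed


lemma comm_group_sub:
  assumes "comm_group G" "subgroup H G" shows "comm_group (G\<lparr>carrier := H\<rparr>)"
proof (rule group.group_comm_groupI)
  interpret comm_group G by fact
  show "group (G\<lparr>carrier := H\<rparr>)" using assms(2) by (rule subgroup_imp_group)
  fix x y assume "x \<in> carrier (G\<lparr>carrier := H\<rparr>)" "y \<in> carrier (G\<lparr>carrier := H\<rparr>)"
  then show "x \<otimes>\<^bsub>G\<lparr>carrier := H\<rparr>\<^esub> y = y \<otimes>\<^bsub>G\<lparr>carrier := H\<rparr>\<^esub> x"
    using assms(2) by (simp add: m_comm subgroup.mem_carrier)
qed

lemma aleph1_free_emb:
  assumes A: "group A" and B: "group B" and fB: "aleph1_free B"
    and h: "h \<in> hom A B" and inj: "inj_on h (carrier A)"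
  shows "aleph1_free A"
  unfolding aleph1_free_def
proof (intro allI impI)
  fix S assume S: "subgroup S A \<and> countable S"
  interpret gh: group_hom A B h using A B h by (simp add: group_hom_def group_hom_axioms_def)
  have sub: "subgroup (h ` S) B" using S gh.subgroup_img_is_subgroup by blast
  have "countable (h ` S)" using S by blast
  then have fr: "free_abelian (B\<lparr>carrier := h ` S\<rparr>)" using fB sub by (simp add: aleph1_free_def)
  have gS: "group (A\<lparr>carrier := S\<rparr>)" using S group.subgroup_imp_group[OF A] by blast
  have Ssub: "S \<subseteq> carrier A" using S subgroup.subset by blast
  have "h \<in> iso (A\<lparr>carrier := S\<rparr>) (B\<lparr>carrier := h ` S\<rparr>)"
  proof (rule isoI)
    show "h \<in> hom (A\<lparr>carrier := S\<rparr>) (B\<lparr>carrier := h ` S\<rparr>)"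
      using h Ssub by (auto simp: hom_def Pi_def subsetD)
    show "bij_betw h (carrier (A\<lparr>carrier := S\<rparr>)) (carrier (B\<lparr>carrier := h ` S\<rparr>))"
      using inj_on_subset[OF inj Ssub] by (simp add: bij_betw_def)
  qed
  then have "A\<lparr>carrier := S\<rparr> \<cong> B\<lparr>carrier := h ` S\<rparr>" by (rule is_isoI)
  then show "free_abelian (A\<lparr>carrier := S\<rparr>)" using free_abelian_iso[OF gS _ fr] by blast
qed

lemma aleph1_free_countable:
  assumes "group A" "aleph1_free A" "countable (carrier A)"
  shows "free_abelian A"
proof -
  have "subgroup (carrier A) A" using assms(1) by (simp add: group.subgroup_self)
  then have "free_abelian (A\<lparr>carrier := carrier A\<rparr>)" using assms unfolding aleph1_free_def by blast
  moreover have "A\<lparr>carrier := carrier A\<rparr> = A" by (cases A) simp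
  ultimately show ?thesis by simp
qed

lemma aleph1_free_quot:
  assumes gh: "group_hom A B h" and fB: "aleph1_free B"
  shows "aleph1_free (A Mod kernel A B h)"
proof -
  interpret group_hom A B h by fact
  have "group (A Mod kernel A B h)" using normal_kernel by (rule normal.factorgroup_is_group)
  then show ?thesis
    using aleph1_free_emb[OF _ H.is_group fB FactGroup_hom FactGroup_inj_on] by blast
qed


lemma rcos_sub_eq: "r_coset (G\<lparr>carrier := K\<rparr>) H x = r_coset G H x"
  by (simp add: r_coset_def)

lemma set_mult_sub_eq: "set_mult (G\<lparr>carrier := K\<rparr>) = set_mult G"
  by (simp add: set_mult_def fun_eq_iff)

lemma aleph1_ext:
  fixes G :: "('a, 'b) monoid_scheme" (structure)
  assumes cG: "comm_group G" and H: "subgroup H G" and K: "subgroup K G" and HK: "H \<subseteq> K"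
    and fK: "aleph1_free (G Mod K)" and fKH: "aleph1_free ((G\<lparr>carrier := K\<rparr>) Mod H)"
  shows "aleph1_free (G Mod H)"
  unfolding aleph1_free_def
proof (intro allI impI)
  interpret comm_group G by fact
  fix S assume SS: "subgroup S (G Mod H) \<and> countable S"
  then have S: "subgroup S (G Mod H)" and cS: "countable S" by auto
  interpret nH: normal H G using H by (simp add: normal_iff_subgroup)
  interpret nK: normal K G using K by (simp add: normal_iff_subgroup)
  define A where "A = (G Mod H)\<lparr>carrier := S\<rparr>"
  have cGH: "comm_group (G Mod H)" using H by (rule abelian_FactGroup)
  have cA: "comm_group A" unfolding A_def using cGH S by (rule comm_group_sub)
  then have gA: "group A" by (simp add: comm_group.axioms(2))
  have gK: "group (G Mod K)" by (rule nK.factorgroup_is_group)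
  have Hsub: "H \<subseteq> carrier G" and Ksub: "K \<subseteq> carrier G" using H K by (auto dest: subgroup.subset)
  have KH: "K <#> H = K"
  proof
    show "K <#> H \<subseteq> K" using HK subgroup_mult_id[OF K] set_mult_def[of G K H] set_mult_def[of G K K] by auto
    show "K \<subseteq> K <#> H"
    proof
      fix k assume "k \<in> K"
      then have "k \<otimes> \<one> \<in> K <#> H" unfolding set_mult_def using subgroup.one_closed[OF H] by blast
      then show "k \<in> K <#> H" using \<open>k \<in> K\<close> Ksub by auto
    qed
  qed
  define \<rho> where "\<rho> = (\<lambda>c. K <#> c)"
  have \<rho>x: "\<rho> (H #> x) = K #> x" if "x \<in> carrier G" for x
    unfolding \<rho>_def using setmult_rcos_assoc[OF Ksub Hsub that] KH by simp
  have Scar: "S \<subseteq> rcosets H" using subgroup.subset[OF S] by (simp add: FactGroup_def)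
  have Sx: "\<exists>x \<in> carrier G. c = H #> x" if "c \<in> S" for c
    using that Scar by (auto simp: RCOSETS_def)
  have \<rho>hom: "\<rho> \<in> hom A (G Mod K)"
  proof (rule homI)
    fix c assume "c \<in> carrier A"
    then obtain x where "x \<in> carrier G" "c = H #> x" using Sx by (auto simp: A_def)
    then show "\<rho> c \<in> carrier (G Mod K)" using \<rho>x by (auto simp: carrier_FactGroup)
  next
    fix c d assume "c \<in> carrier A" "d \<in> carrier A"
    then obtain x y where xy: "x \<in> carrier G" "c = H #> x" "y \<in> carrier G" "d = H #> y"
      using Sx by (auto simp: A_def) metis
    have "c \<otimes>\<^bsub>A\<^esub> d = H #> (x \<otimes> y)" using xy nH.rcos_sum by (simp add: A_def FactGroup_def)
    then show "\<rho> (c \<otimes>\<^bsub>A\<^esub> d) = \<rho> c \<otimes>\<^bsub>G Mod K\<^esub> \<rho> d"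
      using xy \<rho>x nK.rcos_sum by (simp add: FactGroup_def)
  qed
  have ghA: "group_hom A (G Mod K) \<rho>" using gA gK \<rho>hom by (simp add: group_hom_def group_hom_axioms_def)
  interpret ghA: group_hom A "G Mod K" \<rho> by fact
  define N where "N = kernel A (G Mod K) \<rho>"
  have NA: "subgroup N A" unfolding N_def by (rule ghA.subgroup_kernel)
  have fQ: "free_abelian (A Mod N)"
  proof (rule aleph1_free_countable)
    show "group (A Mod N)" unfolding N_def using ghA.normal_kernel by (rule normal.factorgroup_is_group)
    have "aleph1_free (A Mod kernel A (G Mod K) \<rho>)" using aleph1_free_quot[OF ghA fK] .
    then show "aleph1_free (A Mod N)" by (simp add: N_def)
    show "countable (carrier (A Mod N))" unfolding carrier_FactGroup using cS by (simp add: A_def)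
  qed
  have gN: "group (A\<lparr>carrier := N\<rparr>)" using NA by (rule group.subgroup_imp_group[OF gA])
  have HsubK: "subgroup H (G\<lparr>carrier := K\<rparr>)" using subgroup_incl[OF H K HK] .
  have cGK: "comm_group (G\<lparr>carrier := K\<rparr>)" using cG K by (rule comm_group_sub)
  have gKH: "group ((G\<lparr>carrier := K\<rparr>) Mod H)"
    using HsubK cGK by (metis comm_group.abelian_FactGroup comm_group.axioms(2))
  have Nin: "c \<in> rcosets\<^bsub>G\<lparr>carrier := K\<rparr>\<^esub> H" if "c \<in> N" for c
  proof -
    from that have c: "c \<in> S" "\<rho> c = K" by (auto simp: N_def kernel_def A_def)
    then obtain x where x: "x \<in> carrier G" "c = H #> x" using Sx by blast
    then have "K #> x = K" using c \<rho>x by simp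
    then have "x \<in> K" using rcos_self[OF x(1) K] by simp
    then show ?thesis using x by (auto simp: RCOSETS_def rcos_sub_eq)
  qed
  have idhom: "id \<in> hom (A\<lparr>carrier := N\<rparr>) ((G\<lparr>carrier := K\<rparr>) Mod H)"
    using Nin by (auto simp: hom_def A_def FactGroup_def set_mult_sub_eq)
  have "aleph1_free (A\<lparr>carrier := N\<rparr>)"
    by (rule aleph1_free_emb[OF gN gKH fKH idhom]) simp
  moreover have "countable (carrier (A\<lparr>carrier := N\<rparr>))"
    using cS NA subgroup.subset[OF NA] by (auto simp: A_def intro: countable_subset)
  ultimately have fN: "free_abelian (A\<lparr>carrier := N\<rparr>)" using gN aleph1_free_countable by blast
  have "free_abelian A" using free_ext[OF cA NA fN fQ] .
  then show "free_abelian ((G Mod H)\<lparr>carrier := S\<rparr>)" by (simp add: A_def)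
qed


lemma pinv_Some:
  assumes inj: "inj_on \<phi> (dom \<phi>)"
  shows "pinv \<phi> y = Some x \<longleftrightarrow> \<phi> x = Some y"
proof
  assume a: "pinv \<phi> y = Some x"
  then have y: "y \<in> ran \<phi>" by (auto simp: pinv_def split: if_splits)
  then obtain x0 where x0: "\<phi> x0 = Some y" by (auto simp: ran_def)
  have u: "\<And>x'. \<phi> x' = Some y \<Longrightarrow> x' = x0" using inj x0 by (metis domI inj_onD)
  have "(THE x. \<phi> x = Some y) = x0" using x0 u by (rule the_equality)
  then show "\<phi> x = Some y" using a y x0 by (simp add: pinv_def)
next
  assume a: "\<phi> x = Some y"
  then have y: "y \<in> ran \<phi>" by (auto simp: ran_def)
  have u: "\<And>x'. \<phi> x' = Some y \<Longrightarrow> x' = x" using inj a by (metis domI inj_onD)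
  have "(THE x'. \<phi> x' = Some y) = x" using a u by (rule the_equality)
  then show "pinv \<phi> y = Some x" using y by (simp add: pinv_def)
qed

lemma dom_pinv: "dom (pinv \<phi>) = ran \<phi>"
  by (auto simp: pinv_def dom_def split: if_splits)

lemma ran_pinv:
  assumes inj: "inj_on \<phi> (dom \<phi>)"
  shows "ran (pinv \<phi>) = dom \<phi>"
  using pinv_Some[OF inj] by (auto simp: ran_def dom_def)

lemma partial_aut_pinv:
  assumes "group G" and pa: "partial_aut G \<phi>"
  shows "partial_aut G (pinv \<phi>)"
proof -
  have inj: "inj_on \<phi> (dom \<phi>)" using pa by (simp add: partial_aut_def)
  have hom: "\<And>x y. x \<in> dom \<phi> \<Longrightarrow> y \<in> dom \<phi> \<Longrightarrow> \<phi> (x \<otimes>\<^bsub>G\<^esub> y) = Some (the (\<phi> x) \<otimes>\<^bsub>G\<^esub> the (\<phi> y))"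
    using pa by (simp add: partial_aut_def)
  have PS: "pinv \<phi> y = Some x \<longleftrightarrow> \<phi> x = Some y" for x y using pinv_Some[OF inj] .
  show ?thesis unfolding partial_aut_def
  proof (intro conjI ballI)
    show "subgroup (dom (pinv \<phi>)) G" using pa by (simp add: dom_pinv partial_aut_def)
    show "subgroup (ran (pinv \<phi>)) G" using pa by (simp add: ran_pinv[OF inj] partial_aut_def)
    show "inj_on (pinv \<phi>) (dom (pinv \<phi>))"
    proof (rule inj_onI)
      fix a b assume "a \<in> dom (pinv \<phi>)" "b \<in> dom (pinv \<phi>)" "pinv \<phi> a = pinv \<phi> b"
      then obtain x where "pinv \<phi> a = Some x" "pinv \<phi> b = Some x" by auto
      then show "a = b" using PS by simp
    qed
    fix a b assume a: "a \<in> dom (pinv \<phi>)" and b: "b \<in> dom (pinv \<phi>)"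
    then obtain x y where x: "pinv \<phi> a = Some x" and y: "pinv \<phi> b = Some y" by auto
    then have "\<phi> x = Some a" "\<phi> y = Some b" using PS by auto
    then have "\<phi> (x \<otimes>\<^bsub>G\<^esub> y) = Some (a \<otimes>\<^bsub>G\<^esub> b)" using hom[of x y] by (simp add: domI)
    then have "pinv \<phi> (a \<otimes>\<^bsub>G\<^esub> b) = Some (x \<otimes>\<^bsub>G\<^esub> y)" using PS by blast
    then show "pinv \<phi> (a \<otimes>\<^bsub>G\<^esub> b) = Some (the (pinv \<phi> a) \<otimes>\<^bsub>G\<^esub> the (pinv \<phi> b))"
      using x y by simp
  qed
qed

lemma pcomp_Some: "pcomp \<phi> \<psi> x = Some z \<longleftrightarrow> (\<exists>y. \<phi> x = Some y \<and> \<psi> y = Some z)"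
  by (auto simp: pcomp_def map_comp_def split: option.splits)

lemma dom_pcomp: "dom (pcomp \<phi> \<psi>) = {x \<in> dom \<phi>. the (\<phi> x) \<in> dom \<psi>}"
  by (auto simp: pcomp_def map_comp_def dom_def split: option.splits)

lemma ran_pcomp:
  assumes "inj_on \<phi> (dom \<phi>)" "inj_on \<psi> (dom \<psi>)"
  shows "ran (pcomp \<phi> \<psi>) = dom (pcomp (pinv \<psi>) (pinv \<phi>))"
  using pinv_Some[OF assms(1)] pinv_Some[OF assms(2)]
  by (auto simp: ran_def dom_def pcomp_Some)


lemma dom_comp:
  fixes G :: "('a, 'b) monoid_scheme" (structure)
  assumes cG: "comm_group G" and p\<phi>: "partial_aut G \<phi>" and p\<psi>: "partial_aut G \<psi>"
    and f\<phi>: "aleph1_free (G Mod dom \<phi>)" and f\<psi>: "aleph1_free (G Mod dom \<psi>)"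
  shows "subgroup (dom (pcomp \<phi> \<psi>)) G \<and> aleph1_free (G Mod dom (pcomp \<phi> \<psi>))"
proof -
  interpret comm_group G by fact
  define K where "K = dom \<phi>"
  define D where "D = dom \<psi>"
  have K: "subgroup K G" and D: "subgroup D G" and R: "subgroup (ran \<phi>) G"
    using p\<phi> p\<psi> by (auto simp: partial_aut_def K_def D_def)
  have hm: "\<And>x y. x \<in> K \<Longrightarrow> y \<in> K \<Longrightarrow> \<phi> (x \<otimes> y) = Some (the (\<phi> x) \<otimes> the (\<phi> y))"
    using p\<phi> by (simp add: partial_aut_def K_def)
  interpret nD: normal D G using D by (simp add: normal_iff_subgroup)
  have gK: "group (G\<lparr>carrier := K\<rparr>)" using K by (rule subgroup_imp_group)
  have gQ: "group (G Mod D)" by (rule nD.factorgroup_is_group)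
  have phic: "the (\<phi> x) \<in> carrier G" if "x \<in> K" for x
  proof -
    from that obtain y where "\<phi> x = Some y" by (auto simp: K_def)
    then have "y \<in> ran \<phi>" by (auto simp: ran_def)
    then show ?thesis using \<open>\<phi> x = Some y\<close> subgroup.subset[OF R] by auto
  qed
  define h where "h = (\<lambda>x. D #> the (\<phi> x))"
  have hhom: "h \<in> hom (G\<lparr>carrier := K\<rparr>) (G Mod D)"
  proof (rule homI)
    fix x assume "x \<in> carrier (G\<lparr>carrier := K\<rparr>)"
    then show "h x \<in> carrier (G Mod D)" using phic by (auto simp: h_def carrier_FactGroup)
  next
    fix x y assume "x \<in> carrier (G\<lparr>carrier := K\<rparr>)" "y \<in> carrier (G\<lparr>carrier := K\<rparr>)"
    then have xy: "x \<in> K" "y \<in> K" by auto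
    show "h (x \<otimes>\<^bsub>G\<lparr>carrier := K\<rparr>\<^esub> y) = h x \<otimes>\<^bsub>G Mod D\<^esub> h y"
      using xy hm phic nD.rcos_sum by (simp add: h_def FactGroup_def)
  qed
  have gh: "group_hom (G\<lparr>carrier := K\<rparr>) (G Mod D) h"
    using gK gQ hhom by (simp add: group_hom_def group_hom_axioms_def)
  have cos: "D #> a = D \<longleftrightarrow> a \<in> D" if "a \<in> carrier G" for a
    using rcos_self[OF that D] subgroup.rcos_const[OF D is_group] by auto
  have ker: "kernel (G\<lparr>carrier := K\<rparr>) (G Mod D) h = dom (pcomp \<phi> \<psi>)"
    using phic cos by (auto simp: kernel_def h_def dom_pcomp K_def D_def)
  have sub1: "subgroup (dom (pcomp \<phi> \<psi>)) (G\<lparr>carrier := K\<rparr>)"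
    using group_hom.subgroup_kernel[OF gh] ker by simp
  have sub: "subgroup (dom (pcomp \<phi> \<psi>)) G" using incl_subgroup[OF K sub1] .
  have "aleph1_free ((G\<lparr>carrier := K\<rparr>) Mod dom (pcomp \<phi> \<psi>))"
    using aleph1_free_quot[OF gh f\<psi>[folded D_def]] ker by simp
  moreover have "dom (pcomp \<phi> \<psi>) \<subseteq> K" by (auto simp: dom_pcomp K_def)
  ultimately have "aleph1_free (G Mod dom (pcomp \<phi> \<psi>))"
    using aleph1_ext[OF cG sub K _ f\<phi>[folded K_def]] by blast
  with sub show ?thesis by blast
qed

lemma aleph1_free_triv:
  assumes cG: "comm_group G" shows "aleph1_free (G Mod carrier G)"
  unfolding aleph1_free_def
proof (intro allI impI)
  fix S assume S: "subgroup S (G Mod carrier G) \<and> countable S"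
  have gG: "group G" using cG by (simp add: comm_group.axioms(2))
  have gM: "group (G Mod carrier G)"
    using comm_group.abelian_FactGroup[OF cG group.subgroup_self[OF gG]] by (simp add: comm_group.axioms(2))
  have car: "carrier (G Mod carrier G) = {carrier G}"
    using gG by (auto simp: carrier_FactGroup subgroup.rcos_const[OF group.subgroup_self[OF gG] gG]
        intro!: image_eqI[where x="one G"] group.is_monoid monoid.one_closed)
  have "S \<subseteq> {carrier G}" "S \<noteq> {}" using S subgroup.subset[of S] car subgroup.one_closed[of S]
    by blast+
  then have SS: "S = {carrier G}" by blast
  have gS: "group ((G Mod carrier G)\<lparr>carrier := S\<rparr>)" using S group.subgroup_imp_group[OF gM] by blast
  have "(\<lambda>_. 0) \<in> iso ((G Mod carrier G)\<lparr>carrier := S\<rparr>) (free_Abelian_group ({} :: 'a set))"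
  proof (rule isoI)
    show "(\<lambda>_. 0) \<in> hom ((G Mod carrier G)\<lparr>carrier := S\<rparr>) (free_Abelian_group ({} :: 'a set))"
      by (rule homI) auto
    have "carrier (free_Abelian_group ({} :: 'a set)) = {0}" by auto
    then show "bij_betw (\<lambda>_. 0) (carrier ((G Mod carrier G)\<lparr>carrier := S\<rparr>)) (carrier (free_Abelian_group ({} :: 'a set)))"
      using SS by (simp add: bij_betw_def)
  qed
  then show "free_abelian ((G Mod carrier G)\<lparr>carrier := S\<rparr>)"
    using free_abelian_iso_any[OF gS] is_isoI by blast
qed


lemma partial_aut_pcomp:
  assumes cG: "comm_group G" and p\<phi>: "partial_aut G \<phi>" and p\<psi>: "partial_aut G \<psi>"
    and sd: "subgroup (dom (pcomp \<phi> \<psi>)) G" and sr: "subgroup (ran (pcomp \<phi> \<psi>)) G"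
  shows "partial_aut G (pcomp \<phi> \<psi>)"
  unfolding partial_aut_def
proof (intro conjI ballI sd sr)
  have i1: "inj_on \<phi> (dom \<phi>)" and i2: "inj_on \<psi> (dom \<psi>)" using p\<phi> p\<psi> by (auto simp: partial_aut_def)
  have h1: "\<And>x y. x \<in> dom \<phi> \<Longrightarrow> y \<in> dom \<phi> \<Longrightarrow> \<phi> (x \<otimes>\<^bsub>G\<^esub> y) = Some (the (\<phi> x) \<otimes>\<^bsub>G\<^esub> the (\<phi> y))"
   and h2: "\<And>x y. x \<in> dom \<psi> \<Longrightarrow> y \<in> dom \<psi> \<Longrightarrow> \<psi> (x \<otimes>\<^bsub>G\<^esub> y) = Some (the (\<psi> x) \<otimes>\<^bsub>G\<^esub> the (\<psi> y))"
    using p\<phi> p\<psi> by (auto simp: partial_aut_def)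
  show "inj_on (pcomp \<phi> \<psi>) (dom (pcomp \<phi> \<psi>))"
  proof (rule inj_onI)
    fix x x' assume xd: "x \<in> dom (pcomp \<phi> \<psi>)" and "x' \<in> dom (pcomp \<phi> \<psi>)"
      and e: "pcomp \<phi> \<psi> x = pcomp \<phi> \<psi> x'"
    from xd obtain z where z: "pcomp \<phi> \<psi> x = Some z" by blast
    with e have z': "pcomp \<phi> \<psi> x' = Some z" by simp
    from z obtain y where y: "\<phi> x = Some y" "\<psi> y = Some z" unfolding pcomp_Some by blast
    from z' obtain y' where y': "\<phi> x' = Some y'" "\<psi> y' = Some z" unfolding pcomp_Some by blast
    have "y = y'" using inj_onD[OF i2, of y y'] y y' by (simp add: domI)
    then show "x = x'" using inj_onD[OF i1, of x x'] y y' by (simp add: domI)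
  qed
  fix x y assume "x \<in> dom (pcomp \<phi> \<psi>)" "y \<in> dom (pcomp \<phi> \<psi>)"
  then obtain a b c d where ab: "\<phi> x = Some a" "\<psi> a = Some b" and cd: "\<phi> y = Some c" "\<psi> c = Some d"
  proof -
    from \<open>x \<in> dom (pcomp \<phi> \<psi>)\<close> obtain b where "pcomp \<phi> \<psi> x = Some b" by blast
    then obtain a where "\<phi> x = Some a" "\<psi> a = Some b" unfolding pcomp_Some by blast
    moreover from \<open>y \<in> dom (pcomp \<phi> \<psi>)\<close> obtain d where "pcomp \<phi> \<psi> y = Some d" by blast
    then obtain c where "\<phi> y = Some c" "\<psi> c = Some d" unfolding pcomp_Some by blast
    ultimately show thesis using that by blast
  qed
  have "\<phi> (x \<otimes>\<^bsub>G\<^esub> y) = Some (a \<otimes>\<^bsub>G\<^esub> c)" using h1[of x y] ab cd by (simp add: domI)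
  moreover have "\<psi> (a \<otimes>\<^bsub>G\<^esub> c) = Some (b \<otimes>\<^bsub>G\<^esub> d)" using h2[of a c] ab cd by (simp add: domI)
  ultimately have "pcomp \<phi> \<psi> (x \<otimes>\<^bsub>G\<^esub> y) = Some (b \<otimes>\<^bsub>G\<^esub> d)" by (simp add: pcomp_Some)
  moreover have "pcomp \<phi> \<psi> x = Some b" "pcomp \<phi> \<psi> y = Some d" using ab cd by (auto simp: pcomp_Some)
  ultimately show "pcomp \<phi> \<psi> (x \<otimes>\<^bsub>G\<^esub> y) = Some (the (pcomp \<phi> \<psi> x) \<otimes>\<^bsub>G\<^esub> the (pcomp \<phi> \<psi> y))"
    by simp
qed

theorem lemma3p1:
  fixes G :: "('a, 'b) monoid_scheme"
  assumes "comm_group G"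
  shows "pAut G \<subseteq> {\<phi>. partial_aut G \<phi>}
    \<and> (\<forall>\<phi>\<in>pAut G. \<forall>\<psi>\<in>pAut G. pcomp \<phi> \<psi> \<in> pAut G)
    \<and> pid G \<in> pAut G
    \<and> pneg G \<in> pAut G
    \<and> (\<forall>\<phi>\<in>pAut G. pinv \<phi> \<in> pAut G)"
proof (intro conjI ballI)
  have cG: "comm_group G" by fact
  interpret comm_group G by fact
  show "pAut G \<subseteq> {\<phi>. partial_aut G \<phi>}" by (auto simp: pAut_def)
  have trivf: "aleph1_free (G Mod carrier G)" using cG by (rule aleph1_free_triv)
  show "pinv \<phi> \<in> pAut G" if "\<phi> \<in> pAut G" for \<phi>
  proof -
    have pa: "partial_aut G \<phi>" using that by (simp add: pAut_def)
    then have inj: "inj_on \<phi> (dom \<phi>)" by (simp add: partial_aut_def)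
    show ?thesis using that partial_aut_pinv[OF is_group pa]
      by (simp add: pAut_def dom_pinv ran_pinv[OF inj])
  qed
  fix \<phi> \<psi> assume \<phi>: "\<phi> \<in> pAut G" and \<psi>: "\<psi> \<in> pAut G"
  have p\<phi>: "partial_aut G \<phi>" and p\<psi>: "partial_aut G \<psi>" using \<phi> \<psi> by (auto simp: pAut_def)
  have i\<phi>: "inj_on \<phi> (dom \<phi>)" and i\<psi>: "inj_on \<psi> (dom \<psi>)" using p\<phi> p\<psi> by (auto simp: partial_aut_def)
  have ip\<phi>: "partial_aut G (pinv \<phi>)" and ip\<psi>: "partial_aut G (pinv \<psi>)"
    using partial_aut_pinv[OF is_group] p\<phi> p\<psi> by auto
  have D: "subgroup (dom (pcomp \<phi> \<psi>)) G \<and> aleph1_free (G Mod dom (pcomp \<phi> \<psi>))"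
    using dom_comp[OF cG p\<phi> p\<psi>] \<phi> \<psi> by (auto simp: pAut_def)
  have "subgroup (dom (pcomp (pinv \<psi>) (pinv \<phi>))) G \<and> aleph1_free (G Mod dom (pcomp (pinv \<psi>) (pinv \<phi>)))"
    using dom_comp[OF cG ip\<psi> ip\<phi>] \<phi> \<psi> by (auto simp: pAut_def dom_pinv)
  then have R: "subgroup (ran (pcomp \<phi> \<psi>)) G \<and> aleph1_free (G Mod ran (pcomp \<phi> \<psi>))"
    by (simp add: ran_pcomp[OF i\<phi> i\<psi>])
  show "pcomp \<phi> \<psi> \<in> pAut G"
    using D R partial_aut_pcomp[OF cG p\<phi> p\<psi>] by (simp add: pAut_def)
next
  have cG: "comm_group G" by fact
  interpret comm_group G by fact
  have trivf: "aleph1_free (G Mod carrier G)" using cG by (rule aleph1_free_triv)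
  have d: "dom (pid G) = carrier G" and r: "ran (pid G) = carrier G"
    by (auto simp: pid_def dom_def ran_def split: if_splits)
  have "partial_aut G (pid G)" unfolding partial_aut_def d r
    by (auto simp: subgroup_self inj_on_def pid_def split: if_splits)
  then show "pid G \<in> pAut G" using trivf by (simp add: pAut_def d r)
next
  have cG: "comm_group G" by fact
  interpret comm_group G by fact
  have trivf: "aleph1_free (G Mod carrier G)" using cG by (rule aleph1_free_triv)
  have d: "dom (pneg G) = carrier G" by (auto simp: pneg_def dom_def split: if_splits)
  have r: "ran (pneg G) = carrier G"
  proof
    show "ran (pneg G) \<subseteq> carrier G" by (auto simp: pneg_def ran_def split: if_splits)
    show "carrier G \<subseteq> ran (pneg G)"
    proof
      fix x assume x: "x \<in> carrier G"
      then have "pneg G (inv\<^bsub>G\<^esub> x) = Some x" by (simp add: pneg_def)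
      then show "x \<in> ran (pneg G)" by (auto simp: ran_def)
    qed
  qed
  have "partial_aut G (pneg G)" unfolding partial_aut_def d r
    by (auto simp: subgroup_self inj_on_def pneg_def inv_mult split: if_splits) (metis inv_inv)
  then show "pneg G \<in> pAut G" using trivf by (simp add: pAut_def d r)
qed

end
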